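(* Let $(\theta_t)_{t\in\mathbb R}$ be a smooth green path and $t_0<t_1$. If $X_0\in\mathcal W(\theta_{t_0})$ and $X_1\in\mathcal W(\theta_{t_1})$, then every strict morphism $X_0\to X_1$ is zero. Moreover, for each $t$, every strict morphism between two non-isomorphic objects of $\mathcal W_0(\theta_t)$ is zero.
   Context: Let $\Lambda$ be a finite dimensional algebra over a field with $n$ isoclasses of simple modules, and $\mathrm{mod}\text-\Lambda$ the category of finitely generated right $\Lambda$-modules. Fix a torsion class $\mathcal G\subseteq\mathrm{mod}\text-\Lambda$ (closed under isomorphisms, extensions and quotients). For $B\in\mathcal G$, a subobject of $B$ is a submodule in $\mathcal G$; a subobject $A\subseteq B$ is strict if $A\cap B'\in\mathcal G$ for every subobject $B'$ of $B$; a strict quotient of $B$ is $B/A$ with $A$ a strict subobject. A strict morphism is a homomorphism $f:A\to B$ with $A,B\in\mathcal G$ such that $\ker f\in\mathcal G$ is a strict subobject of $A$ and $\operatorname{im} f$ is a strict subobject of $B$. Let $V_\Lambda=\mathrm{Hom}_{\mathbb Z}(K_0\Lambda,\mathbb R)\cong\mathbb R^n$; $\theta(M)$ denotes $\theta$ applied to the dimension vector of $M$. For $M\in\mathcal G$, $D_{\mathcal G}(M)$ is the set of $\theta$ with $\theta(M)=0$ and $\theta(M')\le0$ for every strict subobject $M'$ of $M$. $\mathcal W(\theta)$ is the class of $X\in\mathcal G$ with $\theta\in D_{\mathcal G}(X)$, and $\mathcal W_0(\theta)$ is the class of nonzero $X\in\mathcal W(\theta)$ such that no nonzero proper strict subobject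 of $X$ lies in $\mathcal W(\theta)$. A smooth green path is a smooth map $t\mapsto\theta_t$, $\mathbb R\to V_\Lambda$, such that: (1) whenever $\theta_{t_0}\in D_{\mathcal G}(M)$ for some nonzero $M\in\mathcal G$, $\frac{d}{dt}\theta_t(M)|_{t=t_0}>0$; (2) there is $T$ such that $\theta_t(M)>0$ for all $t>T$ and all nonzero $M\in\mathcal G$; (3) there is $T'$ such that $\theta_t(M)<0$ for all $t<T'$ and all nonzero $M\in\mathcal G$. *)

theory Defs
  imports "HOL-Analysis.Analysis" "HOL-Library.Function_Algebras"
begin

text \<open>The algebra Lambda is the ring type 'l, a k-algebra via a central ring
homomorphism iota from the field 'k, finite dimensional over k.\<close>

definition fd_algebra :: "('k::field \<Rightarrow> 'l::ring_1) \<Rightarrow> bool" where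
  "fd_algebra \<iota> \<longleftrightarrow>
     \<iota> 1 = 1 \<and> (\<forall>a b. \<iota> (a + b) = \<iota> a + \<iota> b) \<and> (\<forall>a b. \<iota> (a * b) = \<iota> a * \<iota> b) \<and>
     (\<forall>a x. \<iota> a * x = x * \<iota> a) \<and>
     (\<exists>B. finite B \<and> (\<forall>x. \<exists>c. x = (\<Sum>b\<in>B. \<iota> (c b) * b)))"

text \<open>Universe of modules: a module is a pair (M, rho) where M is an additive
subgroup of the ambient group nat => 'k and rho is a right action of 'l.
Every finitely generated Lambda-module (a finite dimensional k-space) is
isomorphic to such a pair, so this universe represents all of mod-Lambda.\<close>

type_synonym ('k,'l) rmod = "(nat \<Rightarrow> 'k) set \<times> ((nat \<Rightarrow> 'k) \<Rightarrow> 'l \<Rightarrow> (nat \<Rightarrow> 'k))"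

definition right_module :: "('k::field,'l::ring_1) rmod \<Rightarrow> bool" where
  "right_module X \<longleftrightarrow> (let M = fst X; \<rho> = snd X in
     0 \<in> M \<and> (\<forall>x\<in>M. \<forall>y\<in>M. x + y \<in> M) \<and> (\<forall>x\<in>M. \<forall>a. \<rho> x a \<in> M) \<and>
     (\<forall>x\<in>M. \<forall>y\<in>M. \<forall>a. \<rho> (x + y) a = \<rho> x a + \<rho> y a) \<and>
     (\<forall>x\<in>M. \<forall>a b. \<rho> x (a + b) = \<rho> x a + \<rho> x b) \<and>
     (\<forall>x\<in>M. \<forall>a b. \<rho> x (a * b) = \<rho> (\<rho> x a) b) \<and>
     (\<forall>x\<in>M. \<rho> x 1 = x))"

definition fg_module :: "('k::field,'l::ring_1) rmod \<Rightarrow> bool" where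
  "fg_module X \<longleftrightarrow> right_module X \<and>
     (\<exists>S. finite S \<and> S \<subseteq> fst X \<and> (\<forall>x\<in>fst X. \<exists>c. x = (\<Sum>s\<in>S. snd X s (c s))))"

definition submod :: "(nat \<Rightarrow> 'k::field) set \<Rightarrow> ('k,'l::ring_1) rmod \<Rightarrow> bool" where
  "submod N X \<longleftrightarrow> N \<subseteq> fst X \<and> right_module (N, snd X)"

definition module_hom ::
  "((nat \<Rightarrow> 'k) \<Rightarrow> (nat \<Rightarrow> 'k)) \<Rightarrow> ('k::field,'l::ring_1) rmod \<Rightarrow> ('k,'l) rmod \<Rightarrow> bool" where
  "module_hom f X Y \<longleftrightarrow> (\<forall>x\<in>fst X. f x \<in> fst Y) \<and>
     (\<forall>x\<in>fst X. \<forall>y\<in>fst X. f (x + y) = f x + f y) \<and>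
     (\<forall>x\<in>fst X. \<forall>a. f (snd X x a) = snd Y (f x) a)"

definition hom_ker :: "((nat \<Rightarrow> 'k) \<Rightarrow> (nat \<Rightarrow> 'k)) \<Rightarrow> ('k::field,'l) rmod \<Rightarrow> (nat \<Rightarrow> 'k) set" where
  "hom_ker f X = {x \<in> fst X. f x = 0}"

definition mod_iso :: "('k::field,'l::ring_1) rmod \<Rightarrow> ('k,'l) rmod \<Rightarrow> bool" where
  "mod_iso X Y \<longleftrightarrow> (\<exists>f. module_hom f X Y \<and> bij_betw f (fst X) (fst Y))"

definition torsion_class :: "('k::field,'l::ring_1) rmod set \<Rightarrow> bool" where
  "torsion_class G \<longleftrightarrow>
     (\<forall>X\<in>G. fg_module X) \<and>
     (\<forall>X Y. X \<in> G \<longrightarrow> fg_module Y \<longrightarrow> mod_iso X Y \<longrightarrow> Y \<in> G) \<and>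
     (\<forall>X Y f. X \<in> G \<longrightarrow> fg_module Y \<longrightarrow> module_hom f X Y \<longrightarrow> f ` fst X = fst Y \<longrightarrow> Y \<in> G) \<and>
     (\<forall>B N C g. fg_module B \<longrightarrow> submod N B \<longrightarrow> (N, snd B) \<in> G \<longrightarrow> C \<in> G \<longrightarrow>
        module_hom g B C \<longrightarrow> g ` fst B = fst C \<longrightarrow> hom_ker g B = N \<longrightarrow> B \<in> G)"

definition subobj :: "('k::field,'l::ring_1) rmod set \<Rightarrow> (nat \<Rightarrow> 'k) set \<Rightarrow> ('k,'l) rmod \<Rightarrow> bool" where
  "subobj G A B \<longleftrightarrow> submod A B \<and> (A, snd B) \<in> G"

definition strict_subobj :: "('k::field,'l::ring_1) rmod set \<Rightarrow> (nat \<Rightarrow> 'k) set \<Rightarrow> ('k,'l) rmod \<Rightarrow> bool" where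
  "strict_subobj G A B \<longleftrightarrow> subobj G A B \<and> (\<forall>B'. subobj G B' B \<longrightarrow> (A \<inter> B', snd B) \<in> G)"

definition strict_morphism ::
  "('k::field,'l::ring_1) rmod set \<Rightarrow> ((nat \<Rightarrow> 'k) \<Rightarrow> (nat \<Rightarrow> 'k)) \<Rightarrow> ('k,'l) rmod \<Rightarrow> ('k,'l) rmod \<Rightarrow> bool" where
  "strict_morphism G f X Y \<longleftrightarrow> X \<in> G \<and> Y \<in> G \<and> module_hom f X Y \<and>
     strict_subobj G (hom_ker f X) X \<and> strict_subobj G (f ` fst X) Y"

text \<open>Elements of V_Lambda = Hom(K_0 Lambda, R): real valued functions on
finitely generated modules that are isomorphism invariant and additive on
short exact sequences (universal property of the Grothendieck group);
theta(M) is then theta applied to the class (dimension vector) of M.\<close>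

definition V_elem :: "(('k::field,'l::ring_1) rmod \<Rightarrow> real) \<Rightarrow> bool" where
  "V_elem \<theta> \<longleftrightarrow>
     (\<forall>X Y. fg_module X \<longrightarrow> fg_module Y \<longrightarrow> mod_iso X Y \<longrightarrow> \<theta> X = \<theta> Y) \<and>
     (\<forall>B N C g. fg_module B \<longrightarrow> submod N B \<longrightarrow> fg_module C \<longrightarrow> module_hom g B C \<longrightarrow>
        g ` fst B = fst C \<longrightarrow> hom_ker g B = N \<longrightarrow> \<theta> B = \<theta> (N, snd B) + \<theta> C)"

definition in_D :: "('k::field,'l::ring_1) rmod set \<Rightarrow> (('k,'l) rmod \<Rightarrow> real) \<Rightarrow> ('k,'l) rmod \<Rightarrow> bool" where
  "in_D G \<theta> M \<longleftrightarrow> \<theta> M = 0 \<and> (\<forall>A. strict_subobj G A M \<longrightarrow> \<theta> (A, snd M) \<le> 0)"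

definition W_cls :: "('k::field,'l::ring_1) rmod set \<Rightarrow> (('k,'l) rmod \<Rightarrow> real) \<Rightarrow> ('k,'l) rmod set" where
  "W_cls G \<theta> = {X \<in> G. in_D G \<theta> X}"

definition W0_cls :: "('k::field,'l::ring_1) rmod set \<Rightarrow> (('k,'l) rmod \<Rightarrow> real) \<Rightarrow> ('k,'l) rmod set" where
  "W0_cls G \<theta> = {X \<in> W_cls G \<theta>. fst X \<noteq> {0} \<and>
     (\<forall>A. strict_subobj G A X \<longrightarrow> A \<noteq> {0} \<longrightarrow> A \<noteq> fst X \<longrightarrow> (A, snd X) \<notin> W_cls G \<theta>)}"

definition smooth_real :: "(real \<Rightarrow> real) \<Rightarrow> bool" where
  "smooth_real f \<longleftrightarrow> (\<forall>k x. (deriv ^^ k) f differentiable (at x))"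

definition smooth_green_path :: "('k::field,'l::ring_1) rmod set \<Rightarrow> (real \<Rightarrow> ('k,'l) rmod \<Rightarrow> real) \<Rightarrow> bool" where
  "smooth_green_path G \<theta> \<longleftrightarrow>
     (\<forall>t. V_elem (\<theta> t)) \<and>
     (\<forall>X. fg_module X \<longrightarrow> smooth_real (\<lambda>t. \<theta> t X)) \<and>
     (\<forall>t0 M. M \<in> G \<longrightarrow> fst M \<noteq> {0} \<longrightarrow> in_D G (\<theta> t0) M \<longrightarrow> deriv (\<lambda>t. \<theta> t M) t0 > 0) \<and>
     (\<exists>T. \<forall>t>T. \<forall>M\<in>G. fst M \<noteq> {0} \<longrightarrow> \<theta> t M > 0) \<and>
     (\<exists>T'. \<forall>t<T'. \<forall>M\<in>G. fst M \<noteq> {0} \<longrightarrow> \<theta> t M < 0)"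

end

theory Submission
  imports Defs
begin

interpretation fvs: vector_space "\<lambda>(a::'k::field) (f::'i \<Rightarrow> 'k). (\<lambda>i. a * f i)"
  by unfold_locales (auto simp: algebra_simps plus_fun_def)

lemma (in vector_space) dim_strict_mono:
  assumes U: "subspace U" and V: "subspace V" and UV: "U \<subset> V"
    and W: "V \<subseteq> span W" "finite W"
  shows "dim U < dim V"
proof -
  obtain BV where BV: "BV \<subseteq> V" "independent BV" "V \<subseteq> span BV" "card BV = dim V"
    using basis_exists by blast
  obtain BU where BU: "BU \<subseteq> U" "independent BU" "U \<subseteq> span BU" "card BU = dim U"
    using basis_exists by blast
  have spU: "span BU = U" using BU U span_minimal by blast
  obtain x where x: "x \<in> V" "x \<notin> U" using UV by blast
  have ind: "independent (insert x BU)" using BU(2) x(2) spU independent_insertI by auto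
  have finBV: "finite BV" using independent_span_bound[OF W(2) BV(2)] BV(1) W(1) by auto
  have "finite (insert x BU) \<and> card (insert x BU) \<le> card BV"
    using independent_span_bound[OF finBV ind] BU(1) UV x BV(3) by (meson insert_subset psubset_imp_subset subset_trans)
  moreover have "x \<notin> BU" using BU(1) x by auto
  ultimately have "Suc (card BU) \<le> card BV" using card_insert_disjoint by auto
  then show ?thesis using BU BV by simp
qed

lemma real_crossing:
  fixes g :: "real \<Rightarrow> real"
  assumes diff: "\<forall>x. g differentiable (at x)" and tt: "t < t1" and gt: "g t \<ge> 0" and gt1: "g t1 \<le> 0"
    and dp: "\<forall>s. t \<le> s \<longrightarrow> s \<le> t1 \<longrightarrow> g s = 0 \<longrightarrow> deriv g s > 0"
  shows False
proof -
  have D: "\<And>x. DERIV g x :> deriv g x" using diff DERIV_deriv_iff_real_differentiable by blast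
  have cont: "continuous_on UNIV g"
    using D by (meson DERIV_isCont continuous_at_imp_continuous_on)
  obtain u where u: "t < u" "u \<le> t1" "g u < 0"
  proof (cases "g t1 < 0")
    case True then show ?thesis using that tt by auto
  next
    case False
    then have g0: "g t1 = 0" using gt1 by auto
    then have "deriv g t1 > 0" using dp tt by auto
    then obtain d where d: "d > 0" "\<forall>h>0. h < d \<longrightarrow> g (t1 - h) < g t1"
      using DERIV_pos_inc_left[OF D] by blast
    define h where "h = min (d/2) ((t1 - t)/2)"
    have "h > 0" "h < d" "h < t1 - t" using d tt by (auto simp: h_def min_def)
    then show ?thesis using that[of "t1 - h"] d g0 by auto
  qed
  define Z where "Z = {s. t \<le> s \<and> s \<le> u \<and> 0 \<le> g s}"
  have Zeq: "Z = {t..u} \<inter> {s. (\<lambda>_. 0) s \<le> g s}" by (auto simp: Z_def)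
  have clZ: "closed Z" unfolding Zeq
    by (intro closed_Int closed_atLeastAtMost closed_Collect_le cont continuous_on_const)
  have tZ: "t \<in> Z" using gt u by (auto simp: Z_def)
  have bdd: "bdd_above Z" by (auto simp: Z_def bdd_above_def)
  define s0 where "s0 = Sup Z"
  have s0Z: "s0 \<in> Z" unfolding s0_def using closed_contains_Sup[OF _ bdd clZ] tZ by blast
  have ub: "\<And>v. v \<in> Z \<Longrightarrow> v \<le> s0" unfolding s0_def using bdd by (simp add: cSup_upper)
  have s0u: "s0 < u" using s0Z u by (auto simp: Z_def) (metis le_less not_le)
  obtain v where v: "s0 \<le> v" "v \<le> u" "g v = 0"
    using IVT2'[of g u 0 s0] s0Z u s0u cont continuous_on_subset by (force simp: Z_def)
  have "v \<in> Z" using v s0Z by (auto simp: Z_def)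
  then have "v = s0" using ub v by force
  then have gs0: "g s0 = 0" using v by simp
  have "deriv g s0 > 0" using dp gs0 s0Z u by (auto simp: Z_def)
  then obtain d where d: "d > 0" "\<forall>h>0. h < d \<longrightarrow> g s0 < g (s0 + h)"
    using DERIV_pos_inc_right[OF D] by blast
  define h where "h = min (d/2) ((u - s0)/2)"
  have h: "h > 0" "h < d" "h < u - s0" using d s0u by (auto simp: h_def min_def)
  then have "s0 + h \<in> Z" using d gs0 s0Z by (auto simp: Z_def)
  then show False using ub h by fastforce
qed

lemma rm_add_r: "right_module (M,\<rho>) \<Longrightarrow> x \<in> M \<Longrightarrow> \<rho> x (a + b) = \<rho> x a + \<rho> x b"
  by (simp add: right_module_def Let_def)
lemma rm_add_l: "right_module (M,\<rho>) \<Longrightarrow> x \<in> M \<Longrightarrow> y \<in> M \<Longrightarrow> \<rho> (x + y) a = \<rho> x a + \<rho> y a"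
  by (simp add: right_module_def Let_def)
lemma rm_mul: "right_module (M,\<rho>) \<Longrightarrow> x \<in> M \<Longrightarrow> \<rho> x (a * b) = \<rho> (\<rho> x a) b"
  by (simp add: right_module_def Let_def)
lemma rm_one: "right_module (M,\<rho>) \<Longrightarrow> x \<in> M \<Longrightarrow> \<rho> x 1 = x"
  by (simp add: right_module_def Let_def)
lemma rm_closed: "right_module (M,\<rho>) \<Longrightarrow> x \<in> M \<Longrightarrow> \<rho> x a \<in> M"
  by (simp add: right_module_def Let_def)
lemma rm_addc: "right_module (M,\<rho>) \<Longrightarrow> x \<in> M \<Longrightarrow> y \<in> M \<Longrightarrow> x + y \<in> M"
  by (simp add: right_module_def Let_def)
lemma rm_0: "right_module (M,\<rho>) \<Longrightarrow> 0 \<in> M"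
  by (simp add: right_module_def Let_def)

lemma rm_zero: assumes "right_module (M,\<rho>)" "x \<in> M" shows "\<rho> x 0 = 0"
proof -
  have "\<rho> x (0 + 0) = \<rho> x 0 + \<rho> x 0" using rm_add_r[OF assms] .
  then show ?thesis by simp
qed

lemma rm_neg: assumes "right_module (M,\<rho>)" "x \<in> M" shows "\<rho> x (-1) = - x"
proof -
  have "\<rho> x (1 + -1) = \<rho> x 1 + \<rho> x (-1)" using rm_add_r[OF assms] .
  then have "0 = x + \<rho> x (-1)" using rm_zero[OF assms] rm_one[OF assms] by simp
  then show ?thesis by (simp add: eq_neg_iff_add_eq_0 add.commute)
qed

lemma rm_sum_l:
  assumes rm: "right_module (M,\<rho>)" and F: "finite F"
  shows "(\<forall>p\<in>F. v p \<in> M) \<Longrightarrow> sum v F \<in> M \<and> \<rho> (sum v F) a = (\<Sum>p\<in>F. \<rho> (v p) a)"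
  using F
proof (induction F rule: finite_induct)
  case empty
  have "\<rho> (0 + 0) a = \<rho> 0 a + \<rho> 0 a" using rm_add_l[OF rm rm_0[OF rm] rm_0[OF rm]] .
  then have "\<rho> 0 a = \<rho> 0 a + \<rho> 0 a" by (simp only: add_0_left)
  then have "\<rho> 0 a = 0" by (metis add_cancel_right_right)
  then show ?case unfolding sum.empty using rm_0[OF rm] by blast
next
  case (insert x F)
  have e: "sum v (insert x F) = v x + sum v F" "(\<Sum>p\<in>insert x F. \<rho> (v p) a) = \<rho> (v x) a + (\<Sum>p\<in>F. \<rho> (v p) a)"
    using insert(1,2) by (rule sum.insert)+
  have vx: "v x \<in> M" and IH: "sum v F \<in> M \<and> \<rho> (sum v F) a = (\<Sum>p\<in>F. \<rho> (v p) a)" using insert by auto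
  have IH1: "sum v F \<in> M" and IH2: "\<rho> (sum v F) a = (\<Sum>p\<in>F. \<rho> (v p) a)" using IH by auto
  have h1: "\<rho> (v x + sum v F) a = \<rho> (v x) a + \<rho> (sum v F) a" using rm_add_l[OF rm vx IH1] .
  show ?case unfolding e
  proof
    show "v x + sum v F \<in> M" using rm_addc[OF rm vx IH1] .
    show "\<rho> (v x + sum v F) a = \<rho> (v x) a + (\<Sum>p\<in>F. \<rho> (v p) a)" unfolding h1 IH2 ..
  qed
qed

lemma rm_sum_r:
  assumes rm: "right_module (M,\<rho>)" and x: "x \<in> M" and F: "finite F"
  shows "\<rho> x (sum c F) = (\<Sum>b\<in>F. \<rho> x (c b))"
  using F
  by (induction F rule: finite_induct) (auto simp: rm_zero[OF rm x] rm_add_r[OF rm x])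

lemma iota_0: "fd_algebra \<iota> \<Longrightarrow> \<iota> 0 = 0"
proof -
  assume "fd_algebra \<iota>"
  then have "\<forall>a b. \<iota> (a + b) = \<iota> a + \<iota> b" by (simp add: fd_algebra_def)
  then have "\<iota> (0 + 0) = \<iota> 0 + \<iota> 0" by blast
  then have "\<iota> 0 = \<iota> 0 + \<iota> 0" by (simp only: add_0_left)
  then show ?thesis by (metis add_cancel_right_right)
qed

lemma fsum_apply: "(\<Sum>p\<in>J. f p) q = (\<Sum>p\<in>J. f p q)"
  by (induction J rule: infinite_finite_induct) auto

lemma length_measure:
  fixes \<iota> :: "'k::field \<Rightarrow> 'l::ring_1" and Y :: "('k,'l) rmod"
  assumes fd: "fd_algebra \<iota>" and fg: "fg_module Y"
  shows "\<exists>\<mu> :: (nat \<Rightarrow> 'k) set \<Rightarrow> nat. \<forall>A N. A \<subset> N \<longrightarrow> N \<subseteq> fst Y \<longrightarrow>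
     right_module (A, snd Y) \<longrightarrow> right_module (N, snd Y) \<longrightarrow> \<mu> A < \<mu> N"
proof -
  define \<rho> where "\<rho> = snd Y"
  have rmY: "right_module (fst Y, \<rho>)" using fg by (simp add: fg_module_def \<rho>_def)
  obtain S where S: "finite S" "S \<subseteq> fst Y" "\<forall>x\<in>fst Y. \<exists>c. x = (\<Sum>s\<in>S. \<rho> s (c s))"
    using fg unfolding fg_module_def \<rho>_def by blast
  obtain B where B: "finite B" "\<forall>x. \<exists>c. x = (\<Sum>b\<in>B. \<iota> (c b) * b)"
    using fd unfolding fd_algebra_def by blast
  have iadd: "\<And>a b. \<iota> (a + b) = \<iota> a + \<iota> b" and imul: "\<And>a b. \<iota> (a * b) = \<iota> a * \<iota> b"
    and icen: "\<And>a x. \<iota> a * x = x * \<iota> a" using fd unfolding fd_algebra_def by blast+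
  have i0: "\<iota> 0 = 0" using iota_0[OF fd] .
  from choice[OF B(2)] obtain D where D: "\<And>x. x = (\<Sum>b\<in>B. \<iota> (D x b) * b)" by blast
  define J where "J = S \<times> B"
  define w where "w = (\<lambda>p. \<rho> (fst p) (snd p))"
  have wY: "\<And>p. p \<in> J \<Longrightarrow> w p \<in> fst Y" using S(2) rm_closed[OF rmY] by (auto simp: J_def w_def)
  have finJ: "finite J" using S(1) B(1) by (simp add: J_def)
  define \<Phi> where "\<Phi> = (\<lambda>e::((nat \<Rightarrow> 'k) \<times> 'l) \<Rightarrow> 'k. \<Sum>p\<in>J. \<rho> (w p) (\<iota> (e p)))"
  have span: "\<exists>e. x = \<Phi> e" if x: "x \<in> fst Y" for x
  proof -
    obtain c where c: "x = (\<Sum>s\<in>S. \<rho> s (c s))" using S(3) x by blast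
    have "\<rho> s (c s) = (\<Sum>b\<in>B. \<rho> (w (s,b)) (\<iota> (D (c s) b)))" if s: "s \<in> S" for s
    proof -
      have sY: "s \<in> fst Y" using s S(2) by auto
      have "\<rho> s (c s) = \<rho> s (\<Sum>b\<in>B. \<iota> (D (c s) b) * b)" by (rule arg_cong[OF D])
      also have "\<dots> = (\<Sum>b\<in>B. \<rho> s (\<iota> (D (c s) b) * b))" using rm_sum_r[OF rmY sY B(1)] .
      also have "\<dots> = (\<Sum>b\<in>B. \<rho> (w (s,b)) (\<iota> (D (c s) b)))"
      proof (rule sum.cong[OF refl])
        fix b
        have "\<rho> s (\<iota> (D (c s) b) * b) = \<rho> s (b * \<iota> (D (c s) b))" by (simp only: icen[of _ b])
        also have "\<dots> = \<rho> (\<rho> s b) (\<iota> (D (c s) b))" by (rule rm_mul[OF rmY sY])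
        finally show "\<rho> s (\<iota> (D (c s) b) * b) = \<rho> (w (s,b)) (\<iota> (D (c s) b))" by (simp add: w_def)
      qed
      finally show ?thesis .
    qed
    then have "x = (\<Sum>s\<in>S. \<Sum>b\<in>B. \<rho> (w (s,b)) (\<iota> (D (c s) b)))" using c by simp
    also have "\<dots> = (\<Sum>p\<in>J. \<rho> (w p) (\<iota> (D (c (fst p)) (snd p))))"
      unfolding J_def by (simp add: sum.cartesian_product case_prod_beta)
    finally have "x = \<Phi> (\<lambda>p. D (c (fst p)) (snd p))" unfolding \<Phi>_def .
    then show ?thesis by blast
  qed
  define P where "P = (\<lambda>A. {e. (\<forall>p. p \<notin> J \<longrightarrow> e p = 0) \<and> \<Phi> e \<in> A})"
  have sub: "fvs.subspace (P A)" if A: "A \<subseteq> fst Y" "right_module (A,\<rho>)" for A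
  proof -
    have mem: "\<And>e p. p \<in> J \<Longrightarrow> \<rho> (w p) (\<iota> (e p)) \<in> fst Y" using wY rm_closed[OF rmY] by blast
    have z: "\<Phi> 0 = 0" by (simp add: \<Phi>_def i0 rm_zero[OF rmY wY])
    have ad: "\<Phi> (e + f) = \<Phi> e + \<Phi> f" for e f
      by (simp add: \<Phi>_def iadd rm_add_r[OF rmY wY] sum.distrib)
    have sc: "\<Phi> (\<lambda>i. a * e i) = \<rho> (\<Phi> e) (\<iota> a)" for a e
    proof -
      have "\<Phi> (\<lambda>i. a * e i) = (\<Sum>p\<in>J. \<rho> (\<rho> (w p) (\<iota> (e p))) (\<iota> a))"
        unfolding \<Phi>_def
      proof (rule sum.cong[OF refl])
        fix p assume p: "p \<in> J"
        have "\<iota> (a * e p) = \<iota> (e p) * \<iota> a" by (simp add: imul[symmetric] mult.commute)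
        then show "\<rho> (w p) (\<iota> (a * e p)) = \<rho> (\<rho> (w p) (\<iota> (e p))) (\<iota> a)"
          using rm_mul[OF rmY wY[OF p]] by simp
      qed
      also have "\<dots> = \<rho> (\<Phi> e) (\<iota> a)"
        unfolding \<Phi>_def using rm_sum_l[OF rmY finJ, of "\<lambda>p. \<rho> (w p) (\<iota> (e p))"] mem by auto
      finally show ?thesis .
    qed
    show ?thesis unfolding fvs.subspace_def P_def
      using z ad sc rm_0[OF A(2)] rm_addc[OF A(2)] rm_closed[OF A(2)] by auto
  qed
  define \<delta> where "\<delta> = (\<lambda>p. \<lambda>q::(nat \<Rightarrow> 'k) \<times> 'l. if q = p then (1::'k) else 0)"
  have fin: "P A \<subseteq> fvs.span (\<delta> ` J)" for A
  proof
    fix e assume e: "e \<in> P A"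
    have "e = (\<Sum>p\<in>J. (\<lambda>i. e p * \<delta> p i))"
    proof
      fix q
      have "(\<Sum>p\<in>J. (\<lambda>i. e p * \<delta> p i)) q = (\<Sum>p\<in>J. e p * \<delta> p q)" by (simp add: fsum_apply)
      also have "\<dots> = (\<Sum>p\<in>J. if p = q then e p else 0)" by (rule sum.cong) (auto simp: \<delta>_def)
      also have "\<dots> = (if q \<in> J then e q else 0)" using finJ by (rule sum.delta)
      also have "\<dots> = e q"
      proof -
        have "\<forall>p. p \<notin> J \<longrightarrow> e p = 0" using e unfolding P_def by blast
        then show ?thesis by metis
      qed
      finally show "e q = (\<Sum>p\<in>J. (\<lambda>i. e p * \<delta> p i)) q" by simp
    qed
    also have "\<dots> \<in> fvs.span (\<delta> ` J)"
      by (intro fvs.span_sum fvs.span_scale fvs.span_base) auto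
    finally show "e \<in> fvs.span (\<delta> ` J)" .
  qed
  have psub: "P A \<subset> P N" if AN: "A \<subset> N" "N \<subseteq> fst Y" for A N
  proof -
    have "P A \<subseteq> P N" using AN by (auto simp: P_def)
    moreover obtain x where x: "x \<in> N" "x \<notin> A" using AN by blast
    then obtain e where e: "x = \<Phi> e" using span AN by blast
    define e' where "e' = (\<lambda>p. if p \<in> J then e p else 0)"
    have "\<Phi> e' = \<Phi> e" unfolding \<Phi>_def e'_def by (rule sum.cong) auto
    then have "e' \<in> P N" "e' \<notin> P A" using x e by (auto simp: P_def e'_def)
    ultimately show ?thesis by blast
  qed
  show ?thesis
  proof (intro exI allI impI)
    fix A N :: "(nat \<Rightarrow> 'k) set"
    assume h: "A \<subset> N" "N \<subseteq> fst Y" "right_module (A, snd Y)" "right_module (N, snd Y)"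
    show "fvs.dim (P A) < fvs.dim (P N)"
      by (rule fvs.dim_strict_mono[OF sub sub psub fin]) (use h finJ in \<open>auto simp: \<rho>_def\<close>)
  qed
qed

lemma tc_fg: "torsion_class G \<Longrightarrow> X \<in> G \<Longrightarrow> fg_module X"
  unfolding torsion_class_def by blast

lemma fg_rm: "fg_module X \<Longrightarrow> right_module (fst X, snd X)"
  unfolding fg_module_def by simp

lemma strict_trans:
  assumes tc: "torsion_class G" and AB: "strict_subobj G A B" and CA: "strict_subobj G C (A, snd B)"
  shows "strict_subobj G C B"
proof -
  have A1: "A \<subseteq> fst B" and A2: "\<forall>B'. subobj G B' B \<longrightarrow> (A \<inter> B', snd B) \<in> G"
    using AB unfolding strict_subobj_def subobj_def submod_def by auto
  have C1: "C \<subseteq> A" "right_module (C, snd B)" "(C, snd B) \<in> G"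
    and C2: "\<forall>B''. subobj G B'' (A, snd B) \<longrightarrow> (C \<inter> B'', snd B) \<in> G"
    using CA unfolding strict_subobj_def subobj_def submod_def by auto
  show ?thesis unfolding strict_subobj_def
  proof (intro conjI allI impI)
    show "subobj G C B" using C1 A1 unfolding subobj_def submod_def by auto
    fix B' assume B': "subobj G B' B"
    have G1: "(A \<inter> B', snd B) \<in> G" using A2 B' by blast
    have "right_module (A \<inter> B', snd B)" using fg_rm[OF tc_fg[OF tc G1]] by simp
    then have "subobj G (A \<inter> B') (A, snd B)" using G1 unfolding subobj_def submod_def by auto
    then have "(C \<inter> (A \<inter> B'), snd B) \<in> G" using C2 by blast
    moreover have "C \<inter> (A \<inter> B') = C \<inter> B'" using C1 by blast
    ultimately show "(C \<inter> B', snd B) \<in> G" by simp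
  qed
qed

lemma strict_self:
  assumes tc: "torsion_class G" and X: "X \<in> G" shows "strict_subobj G (fst X) X"
proof -
  have "right_module (fst X, snd X)" using fg_rm[OF tc_fg[OF tc X]] .
  moreover have "\<And>B'. subobj G B' X \<Longrightarrow> (fst X \<inter> B', snd X) \<in> G"
  proof -
    fix B' assume "subobj G B' X"
    then have "B' \<subseteq> fst X" "(B', snd X) \<in> G" unfolding subobj_def submod_def by auto
    then show "(fst X \<inter> B', snd X) \<in> G" by (simp add: Int_absorb1)
  qed
  ultimately show ?thesis using X unfolding strict_subobj_def subobj_def submod_def by auto
qed

lemma theta_zero:
  assumes V: "V_elem \<theta>" and fg: "fg_module ({0}, \<rho>)"
  shows "\<theta> ({0}, \<rho>) = 0"
proof -
  have rm: "right_module ({0}, \<rho>)" using fg_rm[OF fg] by simp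
  have sub: "submod {0} ({0}, \<rho>)" using rm unfolding submod_def by simp
  have hom: "module_hom id ({0}, \<rho>) ({0}, \<rho>)" unfolding module_hom_def by simp
  have im: "id ` fst ({0}, \<rho>) = fst ({0::nat \<Rightarrow> 'a}, \<rho>)" by simp
  have ker: "hom_ker id ({0}, \<rho>) = {0}" unfolding hom_ker_def by auto
  have "\<theta> ({0}, \<rho>) = \<theta> ({0}, snd ({0::nat \<Rightarrow> 'a}, \<rho>)) + \<theta> ({0}, \<rho>)"
    using V unfolding V_elem_def using fg sub hom im ker by blast
  then show ?thesis by simp
qed

lemma addit:
  assumes V: "V_elem \<theta>" and tc: "torsion_class G" and sm: "strict_morphism G f X Y"
  shows "\<theta> X = \<theta> (hom_ker f X, snd X) + \<theta> (f ` fst X, snd Y)"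
proof -
  have XG: "X \<in> G" and hom: "module_hom f X Y" and sK: "strict_subobj G (hom_ker f X) X"
    and sI: "strict_subobj G (f ` fst X) Y" using sm unfolding strict_morphism_def by auto
  have fgX: "fg_module X" using tc_fg[OF tc XG] .
  have subK: "submod (hom_ker f X) X" using sK unfolding strict_subobj_def subobj_def by auto
  have IG: "(f ` fst X, snd Y) \<in> G" using sI unfolding strict_subobj_def subobj_def by auto
  have fgI: "fg_module (f ` fst X, snd Y)" using tc_fg[OF tc IG] .
  have homI: "module_hom f X (f ` fst X, snd Y)" using hom unfolding module_hom_def by auto
  have im: "f ` fst X = fst (f ` fst X, snd Y)" by simp
  show ?thesis using V unfolding V_elem_def using fgX subK fgI homI im by blast
qed

lemma descend:
  fixes G :: "('k::field,'l::ring_1) rmod set" and \<theta> :: "real \<Rightarrow> ('k,'l) rmod \<Rightarrow> real"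
  assumes tc: "torsion_class G" and sg: "smooth_green_path G \<theta>"
    and mu: "\<forall>A N. A \<subset> N \<longrightarrow> N \<subseteq> Ys \<longrightarrow> right_module (A, \<rho>) \<longrightarrow> right_module (N, \<rho>) \<longrightarrow> \<mu> A < (\<mu> N :: nat)"
  shows "N \<subseteq> Ys \<Longrightarrow> (N,\<rho>) \<in> G \<Longrightarrow> N \<noteq> {0} \<Longrightarrow> (\<forall>A. strict_subobj G A (N,\<rho>) \<longrightarrow> \<theta> t1 (A,\<rho>) \<le> 0)
     \<Longrightarrow> t < t1 \<Longrightarrow> \<theta> t (N,\<rho>) < 0"
proof (induction "\<mu> N" arbitrary: N t rule: less_induct)
  case less
  note NY = less.prems(1) and NG = less.prems(2) and N0 = less.prems(3) and Q = less.prems(4)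
    and tt = less.prems(5)
  define g where "g = (\<lambda>s. \<theta> s (N,\<rho>))"
  have fgN: "fg_module (N,\<rho>)" using tc_fg[OF tc NG] .
  have rmN: "right_module (N,\<rho>)" using fg_rm[OF fgN] by simp
  have Vt: "\<And>s. V_elem (\<theta> s)" using sg unfolding smooth_green_path_def by auto
  have sgs2: "\<forall>X. fg_module X \<longrightarrow> smooth_real (\<lambda>t. \<theta> t X)"
    and sgs3: "\<forall>t0 M. M \<in> G \<longrightarrow> fst M \<noteq> {0} \<longrightarrow> in_D G (\<theta> t0) M \<longrightarrow> 0 < deriv (\<lambda>t. \<theta> t M) t0"
    using sg unfolding smooth_green_path_def by auto
  have "smooth_real g" unfolding g_def by (rule sgs2[rule_format, OF fgN])
  then have diff: "\<forall>x. g differentiable (at x)" unfolding smooth_real_def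
    by (metis funpow_0)
  have selfN: "strict_subobj G N (N,\<rho>)" using strict_self[OF tc NG] by simp
  have gt1: "g t1 \<le> 0" using Q selfN unfolding g_def by blast
  have inD: "in_D G (\<theta> s) (N,\<rho>)" if s: "s \<le> t1" "g s = 0" for s
    unfolding in_D_def
  proof (intro conjI allI impI)
    show "\<theta> s (N,\<rho>) = 0" using s unfolding g_def by simp
    fix A assume sA: "strict_subobj G A (N,\<rho>)"
    have AG: "(A,\<rho>) \<in> G" and AN: "A \<subseteq> N" and rmA: "right_module (A,\<rho>)"
      using sA unfolding strict_subobj_def subobj_def submod_def by auto
    show "\<theta> s (A, snd (N,\<rho>)) \<le> 0"
    proof (cases "s = t1")
      case True then show ?thesis using Q sA by simp
    next
      case False
      then have st: "s < t1" using s by simp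
      show ?thesis
      proof (cases "A = {0}")
        case True
        then show ?thesis using theta_zero[OF Vt tc_fg[OF tc AG[unfolded True]]] True by simp
      next
        case A0: False
        show ?thesis
        proof (cases "A = N")
          case True then show ?thesis using s unfolding g_def by simp
        next
          case False
          then have "A \<subset> N" using AN by blast
          then have lt: "\<mu> A < \<mu> N" using mu NY rmA rmN by blast
          have QA: "\<forall>A'. strict_subobj G A' (A,\<rho>) \<longrightarrow> \<theta> t1 (A',\<rho>) \<le> 0"
            using Q strict_trans[OF tc sA] by simp
          have "\<theta> s (A,\<rho>) < 0" using less.hyps[OF lt _ AG A0 QA st] AN NY by blast
          then show ?thesis by simp
        qed
      qed
    qed
  qed
  have dpos: "\<forall>s. t \<le> s \<longrightarrow> s \<le> t1 \<longrightarrow> g s = 0 \<longrightarrow> deriv g s > 0"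
  proof (intro allI impI)
    fix s assume "t \<le> s" "s \<le> t1" "g s = 0"
    then have "in_D G (\<theta> s) (N,\<rho>)" using inD by blast
    then show "deriv g s > 0" unfolding g_def using sgs3[rule_format, OF NG] N0 by simp
  qed
  show ?case
  proof (rule ccontr)
    assume "\<not> \<theta> t (N,\<rho>) < 0"
    then have "g t \<ge> 0" unfolding g_def by simp
    then show False using real_crossing[OF diff tt _ gt1 dpos] by blast
  qed
qed

theorem mainTheorem17:
  fixes \<iota> :: "'k::field \<Rightarrow> 'l::ring_1"
    and G :: "('k,'l) rmod set"
    and \<theta> :: "real \<Rightarrow> ('k,'l) rmod \<Rightarrow> real"
  assumes "fd_algebra \<iota>"
    and "torsion_class G"
    and "smooth_green_path G \<theta>"
  shows "(\<forall>t0 t1 X0 X1 f. t0 < t1 \<longrightarrow> X0 \<in> W_cls G (\<theta> t0) \<longrightarrow> X1 \<in> W_cls G (\<theta> t1) \<longrightarrow>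
            strict_morphism G f X0 X1 \<longrightarrow> (\<forall>x\<in>fst X0. f x = 0))
       \<and> (\<forall>t X Y f. X \<in> W0_cls G (\<theta> t) \<longrightarrow> Y \<in> W0_cls G (\<theta> t) \<longrightarrow> \<not> mod_iso X Y \<longrightarrow>
            strict_morphism G f X Y \<longrightarrow> (\<forall>x\<in>fst X. f x = 0))"
proof -
  note fd = assms(1) and tc = assms(2) and sg = assms(3)
  have Vt: "\<And>s. V_elem (\<theta> s)" using sg unfolding smooth_green_path_def by auto
  have part1: "\<forall>x\<in>fst X0. f x = 0"
    if tt: "t0 < t1" and X0: "X0 \<in> W_cls G (\<theta> t0)" and X1: "X1 \<in> W_cls G (\<theta> t1)"
      and sm: "strict_morphism G f X0 X1" for t0 t1 X0 X1 f
  proof (rule ccontr)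
    assume "\<not> (\<forall>x\<in>fst X0. f x = 0)"
    then obtain x where x: "x \<in> fst X0" "f x \<noteq> 0" by blast
    define I where "I = f ` fst X0"
    define \<rho> where "\<rho> = snd X1"
    have sI: "strict_subobj G I X1" using sm unfolding strict_morphism_def I_def by auto
    have IG: "(I,\<rho>) \<in> G" and IX: "I \<subseteq> fst X1"
      using sI unfolding strict_subobj_def subobj_def submod_def \<rho>_def by auto
    have I0: "I \<noteq> {0}" using x unfolding I_def by auto
    have X1G: "X1 \<in> G" and D1: "in_D G (\<theta> t1) X1" using X1 unfolding W_cls_def by auto
    have X0G: "X0 \<in> G" and D0: "in_D G (\<theta> t0) X0" using X0 unfolding W_cls_def by auto
    obtain \<mu> :: "(nat \<Rightarrow> 'k) set \<Rightarrow> nat" where mu: "\<forall>A N. A \<subset> N \<longrightarrow> N \<subseteq> fst X1 \<longrightarrow>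
     right_module (A, snd X1) \<longrightarrow> right_module (N, snd X1) \<longrightarrow> \<mu> A < \<mu> N"
      using length_measure[OF fd tc_fg[OF tc X1G]] by blast
    have Q: "\<forall>A. strict_subobj G A (I,\<rho>) \<longrightarrow> \<theta> t1 (A,\<rho>) \<le> 0"
    proof (intro allI impI)
      fix A assume "strict_subobj G A (I,\<rho>)"
      then have "strict_subobj G A X1" using strict_trans[OF tc sI] unfolding \<rho>_def by simp
      then show "\<theta> t1 (A,\<rho>) \<le> 0" using D1 unfolding in_D_def \<rho>_def by blast
    qed
    have neg: "\<theta> t0 (I,\<rho>) < 0"
      using descend[OF tc sg mu[unfolded \<rho>_def[symmetric]] IX IG I0 Q tt] .
    have add: "\<theta> t0 X0 = \<theta> t0 (hom_ker f X0, snd X0) + \<theta> t0 (I, \<rho>)"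
      using addit[OF Vt tc sm] unfolding I_def \<rho>_def .
    have sK: "strict_subobj G (hom_ker f X0) X0" using sm unfolding strict_morphism_def by auto
    have "\<theta> t0 X0 = 0" "\<theta> t0 (hom_ker f X0, snd X0) \<le> 0" using D0 sK unfolding in_D_def by auto
    then show False using add neg by linarith
  qed
  have part2: "\<forall>x\<in>fst X. f x = 0"
    if X: "X \<in> W0_cls G (\<theta> t)" and Y: "Y \<in> W0_cls G (\<theta> t)" and ni: "\<not> mod_iso X Y"
      and sm: "strict_morphism G f X Y" for t X Y f
  proof -
    define I where "I = f ` fst X"
    define K where "K = hom_ker f X"
    have XG: "X \<in> G" and DX: "in_D G (\<theta> t) X" and X0: "fst X \<noteq> {0}"
      and XW: "\<forall>A. strict_subobj G A X \<longrightarrow> A \<noteq> {0} \<longrightarrow> A \<noteq> fst X \<longrightarrow> (A, snd X) \<notin> W_cls G (\<theta> t)"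
      using X unfolding W0_cls_def W_cls_def by auto
    have YG: "Y \<in> G" and DY: "in_D G (\<theta> t) Y"
      and YW: "\<forall>A. strict_subobj G A Y \<longrightarrow> A \<noteq> {0} \<longrightarrow> A \<noteq> fst Y \<longrightarrow> (A, snd Y) \<notin> W_cls G (\<theta> t)"
      using Y unfolding W0_cls_def W_cls_def by auto
    have sI: "strict_subobj G I Y" and sK: "strict_subobj G K X" and hom: "module_hom f X Y"
      using sm unfolding strict_morphism_def I_def K_def by auto
    have add: "\<theta> t X = \<theta> t (K, snd X) + \<theta> t (I, snd Y)"
      using addit[OF Vt tc sm] unfolding I_def K_def .
    have "\<theta> t X = 0" "\<theta> t (K, snd X) \<le> 0" "\<theta> t (I, snd Y) \<le> 0"
      using DX DY sK sI unfolding in_D_def by auto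
    then have zI: "\<theta> t (I, snd Y) = 0" and zK: "\<theta> t (K, snd X) = 0" using add by linarith+
    have IG: "(I, snd Y) \<in> G" using sI unfolding strict_subobj_def subobj_def by auto
    have KG: "(K, snd X) \<in> G" using sK unfolding strict_subobj_def subobj_def by auto
    have IW: "(I, snd Y) \<in> W_cls G (\<theta> t)"
      unfolding W_cls_def in_D_def
    proof (intro CollectI conjI allI impI IG)
      show "\<theta> t (I, snd Y) = 0" by (rule zI)
      fix A assume "strict_subobj G A (I, snd Y)"
      then have "strict_subobj G A Y" using strict_trans[OF tc sI] by simp
      then show "\<theta> t (A, snd (I, snd Y)) \<le> 0" using DY unfolding in_D_def by simp
    qed
    have KW: "(K, snd X) \<in> W_cls G (\<theta> t)"
      unfolding W_cls_def in_D_def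
    proof (intro CollectI conjI allI impI KG)
      show "\<theta> t (K, snd X) = 0" by (rule zK)
      fix A assume "strict_subobj G A (K, snd X)"
      then have "strict_subobj G A X" using strict_trans[OF tc sK] by simp
      then show "\<theta> t (A, snd (K, snd X)) \<le> 0" using DX unfolding in_D_def by simp
    qed
    have Ic: "I = {0} \<or> I = fst Y" using YW sI IW by blast
    have Kc: "K = {0} \<or> K = fst X" using XW sK KW by blast
    show ?thesis
    proof (cases "I = {0}")
      case True then show ?thesis unfolding I_def by blast
    next
      case I0: False
      show ?thesis
      proof (cases "K = fst X")
        case True then show ?thesis unfolding K_def hom_ker_def by blast
      next
        case False
        then have K0: "K = {0}" using Kc by blast
        have IY: "I = fst Y" using Ic I0 by blast
        have rmX: "right_module (fst X, snd X)" using fg_rm[OF tc_fg[OF tc XG]] .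
        have rmY: "right_module (fst Y, snd Y)" using fg_rm[OF tc_fg[OF tc YG]] .
        have inj: "inj_on f (fst X)"
        proof (rule inj_onI)
          fix x y assume x: "x \<in> fst X" and y: "y \<in> fst X" and fxy: "f x = f y"
          have ny: "snd X y (-1) \<in> fst X" using rm_closed[OF rmX y] .
          have fy: "f y \<in> fst Y" using hom y unfolding module_hom_def by blast
          have "f (x + snd X y (-1)) = f x + f (snd X y (-1))"
            using hom x ny unfolding module_hom_def by blast
          also have "f (snd X y (-1)) = snd Y (f y) (-1)" using hom y unfolding module_hom_def by blast
          also have "\<dots> = - f y" using rm_neg[OF rmY fy] .
          finally have eq: "f (x + snd X y (-1)) = f x + - f y" .
          then have "f (x + snd X y (-1)) = 0" using fxy right_minus by metis
          moreover have "x + snd X y (-1) \<in> fst X" using rm_addc[OF rmX x ny] .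
          ultimately have "x + snd X y (-1) \<in> K" unfolding K_def hom_ker_def by blast
          then have "x + snd X y (-1) = 0" using K0 by blast
          then show "x = y" using rm_neg[OF rmX y] add_eq_0_iff2 minus_minus by metis
        qed
        have "bij_betw f (fst X) (fst Y)" using inj IY unfolding bij_betw_def I_def by blast
        then have "mod_iso X Y" using hom unfolding mod_iso_def by blast
        then show ?thesis using ni by blast
      qed
    qed
  qed
  show ?thesis using part1 part2 by blast
qed

end
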